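(* Let $G$ be the undirected graph with vertex set $\{v_1,\dots,v_8\}$ and edge set $\{v_1v_5,\ v_1v_6,\ v_2v_5,\ v_2v_6,\ v_2v_7,\ v_2v_8,\ v_4v_7,\ v_4v_8\}$. Consider the problem of finding a population of size two of $4$-vertex covers of $G$ maximizing the Hamming distance between its two members. The sets $V_1=\{v_1,v_2,v_7,v_8\}$, $V_2=\{v_2,v_4,v_5,v_6\}$, $V_3=\{v_1,v_2,v_3,v_4\}$, $V_4=\{v_5,v_6,v_7,v_8\}$ are $4$-vertex covers of $G$, and $V_1$, $V_2$, $V_4$ are non-excessive. Moreover, the unique population of size two with the maximum Hamming distance, which equals $8$, is $(V_3,V_4)$. The population $(V_1,V_2)$ has Hamming distance $6$, and replacing either of its individuals with a different vertex cover of size $3$ or $4$ strictly reduces the Hamming distance between the two individuals; that is, this population is a local optimum.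
   Context: A vertex cover of $G=(V,E)$ is a set $C\subseteq V$ such that every edge has at least one endpoint in $C$; a $4$-vertex cover is a vertex cover of size at most $4$. A vertex cover $C$ is non-excessive if for every $v\in C$, $C\setminus\{v\}$ is not a vertex cover. Subsets of $V$ are identified with bit strings of length $|V|$ (the $i$-th bit indicates whether $v_i$ is included), and the Hamming distance between two sets is the Hamming distance between the corresponding bit strings, i.e. the size of their symmetric difference. A population of size two is a pair (multiset) of two covers. *)

theory Defs
  imports Main
begin

text \<open>Vertices v_1..v_8 are represented by the natural numbers 1..8.
  Undirected edges are given as pairs; orientation is irrelevant.\<close>

definition G_V :: "nat set" where "G_V = {1..8}"

definition G_E :: "(nat \<times> nat) set" where
  "G_E = {(1,5),(1,6),(2,5),(2,6),(2,7),(2,8),(4,7),(4,8)}"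

definition vertex_cover :: "'a set \<Rightarrow> ('a \<times> 'a) set \<Rightarrow> 'a set \<Rightarrow> bool" where
  "vertex_cover V E C \<longleftrightarrow> C \<subseteq> V \<and> (\<forall>(u,v)\<in>E. u \<in> C \<or> v \<in> C)"

definition k_vertex_cover :: "nat \<Rightarrow> 'a set \<Rightarrow> ('a \<times> 'a) set \<Rightarrow> 'a set \<Rightarrow> bool" where
  "k_vertex_cover k V E C \<longleftrightarrow> vertex_cover V E C \<and> card C \<le> k"

definition non_excessive :: "'a set \<Rightarrow> ('a \<times> 'a) set \<Rightarrow> 'a set \<Rightarrow> bool" where
  "non_excessive V E C \<longleftrightarrow> vertex_cover V E C \<and> (\<forall>v\<in>C. \<not> vertex_cover V E (C - {v}))"

text \<open>Hamming distance of the characteristic bit strings = size of symmetric difference.\<close>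
definition hamming :: "'a set \<Rightarrow> 'a set \<Rightarrow> nat" where
  "hamming A B = card ((A - B) \<union> (B - A))"

end

theory Submission
  imports Defs
begin

definition Sb :: "bool \<Rightarrow> bool \<Rightarrow> bool \<Rightarrow> bool \<Rightarrow> bool \<Rightarrow> bool \<Rightarrow> bool \<Rightarrow> bool \<Rightarrow> nat set" where
  "Sb b1 b2 b3 b4 b5 b6 b7 b8 = (if b1 then {1} else {}) \<union> ((if b2 then {2} else {}) \<union>
     ((if b3 then {3} else {}) \<union> ((if b4 then {4} else {}) \<union> ((if b5 then {5} else {}) \<union>
     ((if b6 then {6} else {}) \<union> ((if b7 then {7} else {}) \<union> (if b8 then {8} else {})))))))"

definition "Covs = {{1,2,4}, {1,2,3,4}, {1,2,4,5}, {1,2,4,6}, {1,2,4,7}, {1,2,4,8},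
   {1,2,7,8}, {2,4,5,6}, {5,6,7,8::nat}}"

lemma Sb_cases:
  assumes "b1 \<or> b5" "b1 \<or> b6" "b2 \<or> b5" "b2 \<or> b6" "b2 \<or> b7" "b2 \<or> b8" "b4 \<or> b7" "b4 \<or> b8"
    "card (Sb b1 b2 b3 b4 b5 b6 b7 b8) \<le> 4"
  shows "Sb b1 b2 b3 b4 b5 b6 b7 b8 \<in> Covs"
  using assms unfolding Sb_def Covs_def
  by (cases b1; cases b2; cases b3; cases b4; cases b5; cases b6; cases b7; cases b8; simp add: insert_commute)

lemma cov_small:
  assumes "vertex_cover G_V G_E C" "card C \<le> 4"
  shows "C \<in> Covs"
proof -
  have sub: "C \<subseteq> {1..8}" using assms(1) by (simp add: vertex_cover_def G_V_def)
  have eq: "C = Sb (1\<in>C) (2\<in>C) (3\<in>C) (4\<in>C) (5\<in>C) (6\<in>C) (7\<in>C) (8\<in>C)"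
  proof
    show "C \<subseteq> Sb (1\<in>C) (2\<in>C) (3\<in>C) (4\<in>C) (5\<in>C) (6\<in>C) (7\<in>C) (8\<in>C)"
    proof
      fix x assume "x \<in> C"
      with sub have "x \<in> {1..8}" by blast
      hence "x = 1 \<or> x = 2 \<or> x = 3 \<or> x = 4 \<or> x = 5 \<or> x = 6 \<or> x = 7 \<or> x = 8" by auto
      with \<open>x \<in> C\<close> show "x \<in> Sb (1\<in>C) (2\<in>C) (3\<in>C) (4\<in>C) (5\<in>C) (6\<in>C) (7\<in>C) (8\<in>C)"
        unfolding Sb_def by auto
    qed
  qed (auto simp: Sb_def split: if_splits)
  have e: "\<forall>(u,v)\<in>G_E. u \<in> C \<or> v \<in> C" using assms(1) by (simp add: vertex_cover_def)
  show ?thesis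
    apply (subst eq)
    apply (rule Sb_cases)
    using e assms(2) eq by (simp_all add: G_E_def)
qed

lemma covs_are: "C \<in> Covs \<Longrightarrow> vertex_cover G_V G_E C"
  by (auto simp: Covs_def vertex_cover_def G_V_def G_E_def)

theorem lemma3:
  defines "V1 \<equiv> {1,2,7,8::nat}" and "V2 \<equiv> {2,4,5,6::nat}"
      and "V3 \<equiv> {1,2,3,4::nat}" and "V4 \<equiv> {5,6,7,8::nat}"
  shows "(k_vertex_cover 4 G_V G_E V1 \<and> k_vertex_cover 4 G_V G_E V2 \<and>
          k_vertex_cover 4 G_V G_E V3 \<and> k_vertex_cover 4 G_V G_E V4)
    \<and> (non_excessive G_V G_E V1 \<and> non_excessive G_V G_E V2 \<and> non_excessive G_V G_E V4)
    \<and> hamming V3 V4 = 8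
    \<and> (\<forall>A B. k_vertex_cover 4 G_V G_E A \<and> k_vertex_cover 4 G_V G_E B \<longrightarrow> hamming A B \<le> 8)
    \<and> (\<forall>A B. k_vertex_cover 4 G_V G_E A \<and> k_vertex_cover 4 G_V G_E B \<and> hamming A B = 8
            \<longrightarrow> (A = V3 \<and> B = V4) \<or> (A = V4 \<and> B = V3))
    \<and> hamming V1 V2 = 6
    \<and> (\<forall>C. vertex_cover G_V G_E C \<and> card C \<in> {3,4} \<and> C \<noteq> V1 \<longrightarrow> hamming C V2 < 6)
    \<and> (\<forall>C. vertex_cover G_V G_E C \<and> card C \<in> {3,4} \<and> C \<noteq> V2 \<longrightarrow> hamming V1 C < 6)"
proof -
  have kc: "k_vertex_cover 4 G_V G_E A \<longleftrightarrow> A \<in> Covs" for A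
  proof
    assume "k_vertex_cover 4 G_V G_E A" then show "A \<in> Covs"
      using cov_small unfolding k_vertex_cover_def by blast
  next
    assume a: "A \<in> Covs"
    have "card A \<le> 4" using a unfolding Covs_def by (elim insertE; simp)
    then show "k_vertex_cover 4 G_V G_E A" using covs_are[OF a] unfolding k_vertex_cover_def by blast
  qed
  have vc34: "vertex_cover G_V G_E C \<Longrightarrow> card C \<in> {3,4} \<Longrightarrow> C \<in> Covs" for C
    using cov_small[of C] by auto
  have p1: "\<forall>A\<in>Covs. \<forall>B\<in>Covs. hamming A B \<le> 8 \<and> (hamming A B = 8
            \<longrightarrow> (A = V3 \<and> B = V4) \<or> (A = V4 \<and> B = V3))"
    unfolding assms Covs_def by (simp add: hamming_def insert_Diff_if)
  have p2: "\<forall>C\<in>Covs. (card C \<in> {3,4} \<and> C \<noteq> V1 \<longrightarrow> hamming C V2 < 6)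
     \<and> (card C \<in> {3,4} \<and> C \<noteq> V2 \<longrightarrow> hamming V1 C < 6)"
    unfolding assms Covs_def by (simp add: hamming_def insert_Diff_if)
  show ?thesis
    unfolding kc
    apply (intro conjI)
    subgoal by (simp add: assms Covs_def)
    subgoal by (simp add: assms Covs_def)
    subgoal by (simp add: assms Covs_def)
    subgoal by (simp add: assms Covs_def)
    subgoal by (auto simp: assms non_excessive_def vertex_cover_def G_V_def G_E_def)
    subgoal by (auto simp: assms non_excessive_def vertex_cover_def G_V_def G_E_def)
    subgoal by (auto simp: assms non_excessive_def vertex_cover_def G_V_def G_E_def)
    subgoal by (simp add: assms hamming_def)
    subgoal using p1 by blast
    subgoal using p1 by blast
    subgoal by (simp add: assms hamming_def)
    subgoal using vc34 p2 by blast
    subgoal using vc34 p2 by blast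
    done
qed

end
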